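(* Every yes-instance of Unweighted Borda Manipulation under single-peaked elections has a solution in which every manipulator places the distinguished candidate $p$ in his/her highest position (i.e., $\pi(p)=|\mathcal{C}|+1$ for every manipulator's vote $\pi$).
   Context: Borda elections: candidates $\mathcal{C}\cup\{p\}$ ($p\notin\mathcal{C}$); each vote is a bijection $\pi:\mathcal{C}\cup\{p\}\to\{1,\dots,|\mathcal{C}|+1\}$, giving candidate $c$ score $\pi(c)-1$; total score is the sum over all votes; $p$ wins iff its total score is strictly higher than that of every other candidate. Given a bijection $\mathcal{L}:\mathcal{C}\cup\{p\}\to\{1,\dots,|\mathcal{C}|+1\}$, a vote $\pi$ is coincident with $\mathcal{L}$ if for any three distinct candidates $a,b,c$ with $\mathcal{L}(a)<\mathcal{L}(b)<\mathcal{L}(c)$ or $\mathcal{L}(c)<\mathcal{L}(b)<\mathcal{L}(a)$, $\pi(c)>\pi(b)$ implies $\pi(b)>\pi(a)$. An election is single-peaked if there exists such an $\mathcal{L}$ (a harmonious order) with which all votes are coincident. UBM under single-peaked elections: input is a single-peaked election with candidates $\mathcal{C}\cup\{p\}$ and votes $\Pi_{\mathcal{V}}$ in which $p$ is not the winner, a harmonious order $\mathcal{L}$, and a set $\mathcal{V}'$ of manipulators. A solution is a multiset of votes $\Pi_{\mathcal{V}'}$, one per manipulator, each coincident with $\mathcal{L}$, such that $p$ has strictly higher total score than every candidate of $\mathcal{C}$ with respect to $\Pi_{\mathcal{V}}\uplus\Pi_{\mathcal{V}'}$. *)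

theory Defs
  imports Main "HOL-Library.Multiset"
begin

definition is_vote :: "'a set \<Rightarrow> 'a \<Rightarrow> ('a \<Rightarrow> nat) \<Rightarrow> bool" where
  "is_vote C p \<pi> \<longleftrightarrow> bij_betw \<pi> (insert p C) {1..card C + 1}"

definition borda_score :: "('a \<Rightarrow> nat) multiset \<Rightarrow> 'a \<Rightarrow> nat" where
  "borda_score V c = (\<Sum>\<pi>\<in>#V. \<pi> c - 1)"

definition borda_winner :: "'a set \<Rightarrow> 'a \<Rightarrow> ('a \<Rightarrow> nat) multiset \<Rightarrow> bool" where
  "borda_winner C p V \<longleftrightarrow> (\<forall>c\<in>C. c \<noteq> p \<longrightarrow> borda_score V c < borda_score V p)"

definition coincident :: "'a set \<Rightarrow> 'a \<Rightarrow> ('a \<Rightarrow> nat) \<Rightarrow> ('a \<Rightarrow> nat) \<Rightarrow> bool" where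
  "coincident C p L \<pi> \<longleftrightarrow>
     (\<forall>a\<in>insert p C. \<forall>b\<in>insert p C. \<forall>c\<in>insert p C.
        a \<noteq> b \<and> b \<noteq> c \<and> a \<noteq> c \<and>
        ((L a < L b \<and> L b < L c) \<or> (L c < L b \<and> L b < L a)) \<longrightarrow>
        (\<pi> c > \<pi> b \<longrightarrow> \<pi> b > \<pi> a))"

definition ubm_solution :: "'a set \<Rightarrow> 'a \<Rightarrow> ('a \<Rightarrow> nat) \<Rightarrow> ('a \<Rightarrow> nat) multiset \<Rightarrow> nat
    \<Rightarrow> ('a \<Rightarrow> nat) multiset \<Rightarrow> bool" where
  "ubm_solution C p L V k W \<longleftrightarrow>
     size W = k \<and>
     (\<forall>\<pi>\<in>#W. is_vote C p \<pi> \<and> coincident C p L \<pi>) \<and>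
     borda_winner C p (V + W)"

end

theory Submission
  imports Defs
begin

definition dst :: "('a \<Rightarrow> nat) \<Rightarrow> 'a \<Rightarrow> 'a \<Rightarrow> int" where
  "dst L p x = \<bar>int (L x) - int (L p)\<bar>"

definition upv :: "'a set \<Rightarrow> 'a \<Rightarrow> ('a \<Rightarrow> nat) \<Rightarrow> ('a \<Rightarrow> nat) \<Rightarrow> 'a \<Rightarrow> nat" where
  "upv C p L \<pi> x = (if x = p then card C + 1 else if \<pi> p < \<pi> x
      then \<pi> p - 1 + card {y\<in>C. \<pi> p < \<pi> y \<and> dst L p x \<le> dst L p y} else \<pi> x)"

context
  fixes C :: "'a set" and p :: 'a and L :: "'a \<Rightarrow> nat" and \<pi> :: "'a \<Rightarrow> nat"
  assumes fin: "finite C" and pC: "p \<notin> C"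
    and injL: "inj_on L (insert p C)"
    and vote: "is_vote C p \<pi>" and coin: "coincident C p L \<pi>"
begin

lemma injpi: "inj_on \<pi> (insert p C)"
  using vote unfolding is_vote_def bij_betw_def by blast

lemma rngpi: "x \<in> insert p C \<Longrightarrow> 1 \<le> \<pi> x \<and> \<pi> x \<le> card C + 1"
  using vote unfolding is_vote_def bij_betw_def by auto

lemma side:
  assumes x: "x \<in> C" "\<pi> p < \<pi> x" and y: "y \<in> C" "\<pi> p < \<pi> y"
  shows "L x < L p \<longleftrightarrow> L y < L p"
proof -
  have nx: "L x \<noteq> L p" using injL x pC by (metis inj_on_def insertCI)
  have ny: "L y \<noteq> L p" using injL y pC by (metis inj_on_def insertCI)
  have H: "\<And>a c. a \<in> C \<Longrightarrow> c \<in> C \<Longrightarrow> a \<noteq> c \<Longrightarrow> (L a < L p \<and> L p < L c) \<Longrightarrow>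
     \<pi> c > \<pi> p \<longrightarrow> \<pi> p > \<pi> a"
    using coin pC unfolding coincident_def by (metis insertCI)
  show ?thesis
  proof (rule ccontr)
    assume "\<not> ?thesis"
    then have "(L x < L p \<and> L p < L y) \<or> (L y < L p \<and> L p < L x)" using nx ny by linarith
    then show False
    proof
      assume h: "L x < L p \<and> L p < L y"
      then have "x \<noteq> y" by auto
      then show False using H[OF x(1) y(1) _ h] x y by auto
    next
      assume h: "L y < L p \<and> L p < L x"
      then have "y \<noteq> x" by auto
      then show False using H[OF y(1) x(1) _ h] x y by auto
    qed
  qed
qed

lemma LneqA: "x \<in> C \<Longrightarrow> L x \<noteq> L p"
  using injL pC by (metis inj_on_def insertCI)

lemma cardA: "card {y\<in>C. \<pi> p < \<pi> y} \<le> card C + 1 - \<pi> p"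
proof -
  have "card {y\<in>C. \<pi> p < \<pi> y} = card (\<pi> ` {y\<in>C. \<pi> p < \<pi> y})"
    using injpi by (intro card_image[symmetric]) (auto intro: inj_on_subset)
  also have "\<dots> \<le> card {\<pi> p + 1..card C + 1}"
    using rngpi by (intro card_mono) auto
  finally show ?thesis by simp
qed

lemma upA:
  assumes "x \<in> C" "\<pi> p < \<pi> x"
  shows "\<pi> p \<le> upv C p L \<pi> x \<and> upv C p L \<pi> x \<le> card C"
proof -
  let ?S = "{y\<in>C. \<pi> p < \<pi> y \<and> dst L p x \<le> dst L p y}"
  have f: "finite ?S" using fin by auto
  have "x \<in> ?S" using assms by auto
  then have "card ?S \<ge> 1" using f by (metis One_nat_def card_gt_0_iff empty_iff Suc_leI)
  moreover have "card ?S \<le> card {y\<in>C. \<pi> p < \<pi> y}" using fin by (intro card_mono) auto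
  moreover have "\<pi> p \<ge> 1" using rngpi by auto
  moreover have "x \<noteq> p" using assms pC by auto
  then have "upv C p L \<pi> x = \<pi> p - 1 + card ?S" using assms(2) unfolding upv_def by simp
  ultimately show ?thesis using cardA by linarith
qed

lemma mono:
  assumes x: "x \<in> C" "\<pi> p < \<pi> x" and y: "y \<in> C" "\<pi> p < \<pi> y"
    and d: "dst L p x < dst L p y"
  shows "upv C p L \<pi> y < upv C p L \<pi> x"
proof -
  let ?Sx = "{y\<in>C. \<pi> p < \<pi> y \<and> dst L p x \<le> dst L p y}"
  let ?Sy = "{z\<in>C. \<pi> p < \<pi> z \<and> dst L p y \<le> dst L p z}"
  have s1: "?Sy \<subseteq> ?Sx" using d by (auto dest: order.strict_trans1)
  have "x \<in> ?Sx" "x \<notin> ?Sy" using x d by auto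
  then have "?Sy \<subset> ?Sx" using s1 by blast
  then have "card ?Sy < card ?Sx" using fin by (intro psubset_card_mono) auto
  moreover have "x \<noteq> p" "y \<noteq> p" using x y pC by auto
  then have "upv C p L \<pi> x = \<pi> p - 1 + card ?Sx" "upv C p L \<pi> y = \<pi> p - 1 + card ?Sy"
    using x(2) y(2) unfolding upv_def by simp_all
  ultimately show ?thesis by linarith
qed

lemma dst_inj:
  assumes x: "x \<in> C" "\<pi> p < \<pi> x" and y: "y \<in> C" "\<pi> p < \<pi> y" and "x \<noteq> y"
  shows "dst L p x \<noteq> dst L p y"
proof
  assume e: "dst L p x = dst L p y"
  have s: "L x < L p \<longleftrightarrow> L y < L p" using side x y .
  have "L x \<noteq> L p" "L y \<noteq> L p" using LneqA x y by auto
  then have "L x = L y" using e s unfolding dst_def by (cases "L x < L p"; simp; linarith)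
  then show False using injL x y assms(5) by (metis inj_on_def insertCI)
qed

lemma Rlt: "x \<in> insert p C \<Longrightarrow> x \<noteq> p \<Longrightarrow> \<not> \<pi> p < \<pi> x \<Longrightarrow> \<pi> x < \<pi> p"
  using injpi by (metis inj_on_def insertCI linorder_neqE_nat)

lemma upv_p: "upv C p L \<pi> p = card C + 1" unfolding upv_def by simp
lemma upv_R: "x \<noteq> p \<Longrightarrow> \<not> \<pi> p < \<pi> x \<Longrightarrow> upv C p L \<pi> x = \<pi> x" unfolding upv_def by simp

lemma upv_inj: "inj_on (upv C p L \<pi>) (insert p C)"
proof (rule inj_onI)
  fix x y assume x: "x \<in> insert p C" and y: "y \<in> insert p C" and e: "upv C p L \<pi> x = upv C p L \<pi> y"
  have pp: "\<pi> p \<le> card C + 1" using rngpi by auto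
  show "x = y"
  proof (rule ccontr)
    assume ne: "x \<noteq> y"
    have val: "\<And>z. z \<in> insert p C \<Longrightarrow> z \<noteq> p \<Longrightarrow> upv C p L \<pi> z \<le> card C"
    proof -
      fix z assume z: "z \<in> insert p C" "z \<noteq> p"
      show "upv C p L \<pi> z \<le> card C"
      proof (cases "\<pi> p < \<pi> z")
        case True then show ?thesis using upA z by auto
      next
        case False then show ?thesis using upv_R[OF z(2) False] Rlt[OF z False] pp by auto
      qed
    qed
    show False
    proof (cases "x = p")
      case True then show False using val[OF y] ne e upv_p by auto
    next
      case xp: False
      show False
      proof (cases "y = p")
        case True then show False using val[OF x xp] e upv_p by auto
      next
        case yp: False
        have xC: "x \<in> C" and yC: "y \<in> C" using x y xp yp by auto
        consider "\<pi> p < \<pi> x" "\<pi> p < \<pi> y" | "\<pi> p < \<pi> x" "\<not> \<pi> p < \<pi> y"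
          | "\<not> \<pi> p < \<pi> x" "\<pi> p < \<pi> y" | "\<not> \<pi> p < \<pi> x" "\<not> \<pi> p < \<pi> y" by blast
        then show False
        proof cases
          case 1
          have "dst L p x \<noteq> dst L p y" using dst_inj xC 1(1) yC 1(2) ne by blast
          then have "dst L p x < dst L p y \<or> dst L p y < dst L p x" by linarith
          then show False using mono xC yC 1 e by (metis less_irrefl)
        next
          case 2 then show False using upA[OF xC] upv_R[OF yp] Rlt[OF y yp] e by fastforce
        next
          case 3 then show False using upA[OF yC] upv_R[OF xp] Rlt[OF x xp] e by fastforce
        next
          case 4 then show False using upv_R[OF xp] upv_R[OF yp] e injpi x y ne
            by (metis inj_on_def)
        qed
      qed
    qed
  qed
qed

lemma upv_rng: "x \<in> insert p C \<Longrightarrow> upv C p L \<pi> x \<in> {1..card C + 1}"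
proof -
  assume x: "x \<in> insert p C"
  have "\<pi> p \<ge> 1" using rngpi by auto
  then show ?thesis
  proof (cases "x = p")
    case True then show ?thesis using upv_p by simp
  next
    case False
    then show ?thesis
    proof (cases "\<pi> p < \<pi> x")
      case True then show ?thesis using upA[of x] x False \<open>\<pi> p \<ge> 1\<close> by auto
    next
      case F: False then show ?thesis using upv_R[OF False F] rngpi[OF x] by auto
    qed
  qed
qed

lemma upv_vote: "is_vote C p (upv C p L \<pi>)"
proof -
  have sub: "upv C p L \<pi> ` insert p C \<subseteq> {1..card C + 1}" using upv_rng by auto
  have "card (upv C p L \<pi> ` insert p C) = card (insert p C)"
    using upv_inj by (rule card_image)
  also have "\<dots> = card {1..card C + 1}" using fin pC by simp
  finally have "upv C p L \<pi> ` insert p C = {1..card C + 1}"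
    using sub by (intro card_subset_eq) auto
  then show ?thesis unfolding is_vote_def bij_betw_def using upv_inj by blast
qed

lemma upv_score: "c \<in> C \<Longrightarrow> upv C p L \<pi> c + \<pi> p \<le> \<pi> c + upv C p L \<pi> p"
proof -
  assume c: "c \<in> C"
  then have cp: "c \<noteq> p" using pC by auto
  show ?thesis
  proof (cases "\<pi> p < \<pi> c")
    case True then show ?thesis using upA[OF c True] upv_p by auto
  next
    case False then show ?thesis using upv_R[OF cp False] upv_p rngpi[of p] by auto
  qed
qed


lemma geo:
  assumes b: "b \<in> C" "\<pi> p < \<pi> b"
    and a: "a \<in> insert p C" "a = p \<or> \<pi> p < \<pi> a"
    and c: "c \<in> insert p C" "c = p \<or> \<pi> p < \<pi> c"
    and d: "a \<noteq> b" "b \<noteq> c" "a \<noteq> c"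
    and bt: "(L a < L b \<and> L b < L c) \<or> (L c < L b \<and> L b < L a)"
  shows "(a \<noteq> p \<and> \<pi> p < \<pi> a \<and> dst L p b < dst L p a) \<or> (c \<noteq> p \<and> \<pi> p < \<pi> c \<and> dst L p b < dst L p c)"
proof -
  have bp: "b \<noteq> p" using b pC by auto
  show ?thesis
  proof (cases "a = p")
    case True
    then have cC: "c \<in> C" "\<pi> p < \<pi> c" "c \<noteq> p" using c d by auto
    have "dst L p b < dst L p c" using bt True unfolding dst_def by auto
    then show ?thesis using cC by auto
  next
    case aP: False
    show ?thesis
    proof (cases "c = p")
      case True
      then have aC: "a \<in> C" "\<pi> p < \<pi> a" using a aP by auto
      have "dst L p b < dst L p a" using bt True unfolding dst_def by auto
      then show ?thesis using aC aP by auto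
    next
      case cP: False
      have aC: "a \<in> C" "\<pi> p < \<pi> a" using a aP by auto
      have cC: "c \<in> C" "\<pi> p < \<pi> c" using c cP by auto
      have s1: "L a < L p \<longleftrightarrow> L b < L p" using side aC b .
      have s2: "L c < L p \<longleftrightarrow> L b < L p" using side cC b .
      have n: "L a \<noteq> L p" "L b \<noteq> L p" "L c \<noteq> L p" using LneqA aC cC b by auto
      have "dst L p b < dst L p a \<or> dst L p b < dst L p c"
        using bt s1 s2 n unfolding dst_def by (cases "L b < L p"; auto)
      then show ?thesis using aC cC aP cP by auto
    qed
  qed
qed

lemma upv_coin: "coincident C p L (upv C p L \<pi>)"
  unfolding coincident_def
proof (intro ballI impI)
  fix a b c assume a: "a \<in> insert p C" and b: "b \<in> insert p C" and c: "c \<in> insert p C"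
    and H: "a \<noteq> b \<and> b \<noteq> c \<and> a \<noteq> c \<and> (L a < L b \<and> L b < L c \<or> L c < L b \<and> L b < L a)"
    and gt: "upv C p L \<pi> b < upv C p L \<pi> c"
  show "upv C p L \<pi> a < upv C p L \<pi> b"
  proof (rule ccontr)
    assume "\<not> ?thesis"
    then have ge: "upv C p L \<pi> b \<le> upv C p L \<pi> a" by simp
    have "upv C p L \<pi> a \<noteq> upv C p L \<pi> b" using upv_inj a b H by (metis inj_on_def)
    with ge have gt2: "upv C p L \<pi> b < upv C p L \<pi> a" by simp
    have pp: "\<pi> p \<le> card C + 1" "1 \<le> \<pi> p" using rngpi by auto
    show False
    proof (cases "b = p")
      case True then show False using gt2 upv_rng[OF a] upv_p by auto
    next
      case bp: False
      then have bC: "b \<in> C" using b by auto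
      show False
      proof (cases "\<pi> p < \<pi> b")
        case True
        have ub: "\<pi> p \<le> upv C p L \<pi> b" using upA[OF bC True] by simp
        have aa: "a = p \<or> \<pi> p < \<pi> a"
        proof (rule ccontr)
          assume "\<not> ?thesis"
          then have "upv C p L \<pi> a = \<pi> a" "\<pi> a < \<pi> p" using upv_R Rlt a by auto
          then show False using gt2 ub by linarith
        qed
        have cc: "c = p \<or> \<pi> p < \<pi> c"
        proof (rule ccontr)
          assume "\<not> ?thesis"
          then have "upv C p L \<pi> c = \<pi> c" "\<pi> c < \<pi> p" using upv_R Rlt c by auto
          then show False using gt ub by linarith
        qed
        have "(a \<noteq> p \<and> \<pi> p < \<pi> a \<and> dst L p b < dst L p a) \<or> (c \<noteq> p \<and> \<pi> p < \<pi> c \<and> dst L p b < dst L p c)"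
          using geo[OF bC True a aa c cc] H by blast
        then show False
        proof
          assume h: "a \<noteq> p \<and> \<pi> p < \<pi> a \<and> dst L p b < dst L p a"
          then have "a \<in> C" using a by auto
          then show False using mono[OF bC True _ _] h gt2 by fastforce
        next
          assume h: "c \<noteq> p \<and> \<pi> p < \<pi> c \<and> dst L p b < dst L p c"
          then have "c \<in> C" using c by auto
          then show False using mono[OF bC True _ _] h gt by fastforce
        qed
      next
        case False
        have ub: "upv C p L \<pi> b = \<pi> b" "\<pi> b < \<pi> p" using upv_R[OF bp False] Rlt[OF b bp False] by auto
        have key: "\<And>x. x \<in> insert p C \<Longrightarrow> upv C p L \<pi> b < upv C p L \<pi> x \<Longrightarrow> \<pi> b < \<pi> x"
        proof -
          fix x assume x: "x \<in> insert p C" and l: "upv C p L \<pi> b < upv C p L \<pi> x"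
          show "\<pi> b < \<pi> x"
          proof (cases "x = p \<or> \<pi> p < \<pi> x")
            case True then show ?thesis using ub by auto
          next
            case False then show ?thesis using upv_R[of x] l ub by auto
          qed
        qed
        have "\<pi> b < \<pi> a" "\<pi> b < \<pi> c" using key[OF a gt2] key[OF c gt] by auto
        moreover have "\<pi> c > \<pi> b \<longrightarrow> \<pi> b > \<pi> a"
          using coin a b c H unfolding coincident_def by blast
        ultimately show False by simp
      qed
    qed
  qed
qed

end

lemma sum_le:
  assumes "\<And>\<pi>. \<pi> \<in># W \<Longrightarrow> f \<pi> + g \<pi> \<le> h \<pi> + k \<pi>"
  shows "(\<Sum>\<pi>\<in>#W. f \<pi>) + (\<Sum>\<pi>\<in>#W. g \<pi>) \<le> (\<Sum>\<pi>\<in>#W. h \<pi>) + (\<Sum>\<pi>\<in>#W. (k \<pi>::nat))"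
  using assms
proof (induction W)
  case empty then show ?case by simp
next
  case (add x W)
  have "f x + g x \<le> h x + k x" using add.prems by simp
  moreover have "(\<Sum>\<pi>\<in>#W. f \<pi>) + (\<Sum>\<pi>\<in>#W. g \<pi>) \<le> (\<Sum>\<pi>\<in>#W. h \<pi>) + (\<Sum>\<pi>\<in>#W. k \<pi>)"
    using add by simp
  ultimately show ?case by simp
qed

theorem mainTheorem6:
  fixes C :: "'a set" and p :: 'a and L :: "'a \<Rightarrow> nat"
    and V :: "('a \<Rightarrow> nat) multiset" and k :: nat
  assumes "finite C"
    and "p \<notin> C"
    and "bij_betw L (insert p C) {1..card C + 1}"
    and "\<forall>\<pi>\<in>#V. is_vote C p \<pi> \<and> coincident C p L \<pi>"
    and "\<not> borda_winner C p V"
    and "\<exists>W. ubm_solution C p L V k W"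
  shows "\<exists>W. ubm_solution C p L V k W \<and> (\<forall>\<pi>\<in>#W. \<pi> p = card C + 1)"
proof -
  obtain W where W: "ubm_solution C p L V k W" using assms(6) by blast
  have injL: "inj_on L (insert p C)" using assms(3) bij_betw_imp_inj_on by blast
  have Wv: "\<And>\<pi>. \<pi> \<in># W \<Longrightarrow> is_vote C p \<pi> \<and> coincident C p L \<pi>"
    using W unfolding ubm_solution_def by blast
  define W' where "W' = image_mset (\<lambda>\<pi>. upv C p L \<pi>) W"
  have sz: "size W' = k" using W unfolding W'_def ubm_solution_def by simp
  have v': "\<forall>\<pi>\<in>#W'. is_vote C p \<pi> \<and> coincident C p L \<pi>"
    unfolding W'_def using Wv upv_vote[OF assms(1,2) injL] upv_coin[OF assms(1,2) injL] by auto
  have top: "\<forall>\<pi>\<in>#W'. \<pi> p = card C + 1" unfolding W'_def upv_def by auto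
  have win: "borda_winner C p (V + W)" using W unfolding ubm_solution_def by blast
  have "borda_winner C p (V + W')"
    unfolding borda_winner_def
  proof (intro ballI impI)
    fix c assume cC: "c \<in> C" and cp: "c \<noteq> p"
    have old: "borda_score (V + W) c < borda_score (V + W) p" using win cC cp unfolding borda_winner_def by blast
    have ineq: "(\<Sum>\<pi>\<in>#W. upv C p L \<pi> c - 1) + (\<Sum>\<pi>\<in>#W. \<pi> p - 1)
        \<le> (\<Sum>\<pi>\<in>#W. \<pi> c - 1) + (\<Sum>\<pi>\<in>#W. upv C p L \<pi> p - 1)"
    proof (rule sum_le)
      fix \<pi> assume "\<pi> \<in># W"
      then have iv: "is_vote C p \<pi>" "coincident C p L \<pi>" using Wv by auto
      have "upv C p L \<pi> c + \<pi> p \<le> \<pi> c + upv C p L \<pi> p"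
        using upv_score[OF assms(1,2) injL iv cC] .
      moreover have "1 \<le> \<pi> p" "1 \<le> upv C p L \<pi> c"
        using rngpi[OF assms(1,2) injL iv, of p] upv_rng[OF assms(1,2) injL iv, of c] cC by auto
      ultimately show "(upv C p L \<pi> c - 1) + (\<pi> p - 1) \<le> (\<pi> c - 1) + (upv C p L \<pi> p - 1)"
        by linarith
    qed
    have e: "\<And>x. borda_score (V + W') x = borda_score V x + (\<Sum>\<pi>\<in>#W. upv C p L \<pi> x - 1)"
      unfolding borda_score_def W'_def by (simp add: image_mset.compositionality comp_def)
    have e2: "\<And>x. borda_score (V + W) x = borda_score V x + (\<Sum>\<pi>\<in>#W. \<pi> x - 1)"
      unfolding borda_score_def by simp
    show "borda_score (V + W') c < borda_score (V + W') p"
      using old ineq unfolding e e2 by linarith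
  qed
  then show ?thesis using sz v' top unfolding ubm_solution_def by blast
qed

end
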